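(* Let $X$ be an infinite dimensional Banach lattice in which $\ell_\infty$ is finitely lattice representable. Then $X_L=\ell_\infty$ with equality of norms.
   Context: Banach lattices are real; disjoint means $|x|\wedge|y|=0$. $\ell_\infty$ is finitely lattice representable in $X$ if for every $n$ and $\varepsilon>0$ there are pairwise disjoint $x_1,\dots,x_n\in X$ with $\max_i|a_i|\le\|\sum a_ix_i\|_X\le(1+\varepsilon)\max_i|a_i|$ for all $a\in\mathbb R^n$. $\mathfrak B_n(X)$ is the set of $n$-tuples of pairwise disjoint norm-one elements of $X$; for $a\in\mathbb R^n$, $\Phi_n(a):=\inf\{\|\sum_{i=1}^n a_ix_i\|_X:(x_i)\in\mathfrak B_n(X)\}$ and $\|a\|_{X_L(n)}:=\inf\{\sum_{k\in F}\Phi_n(a^k):F\text{ finite}, a^k\in\mathbb R^n, a=\sum_{k\in F}a^k\}$; $X_L$ is the space of real sequences $a$ with $\|a\|_{X_L}:=\sup_n\|(a_i)_{i=1}^n\|_{X_L(n)}<\infty$. *)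

theory Defs
  imports "HOL-Analysis.Analysis"
begin

class banach_lattice = banach + lattice +
  assumes bl_add_mono: "x \<le> y \<Longrightarrow> x + z \<le> y + z"
    and bl_scale_mono: "x \<le> y \<Longrightarrow> 0 \<le> c \<Longrightarrow> c *\<^sub>R x \<le> c *\<^sub>R y"
    and bl_norm_mono: "sup x (- x) \<le> sup y (- y) \<Longrightarrow> norm x \<le> norm y"

definition labs :: "'a::banach_lattice \<Rightarrow> 'a" where
  "labs x = sup x (- x)"

definition ldisjoint :: "'a::banach_lattice \<Rightarrow> 'a \<Rightarrow> bool" where
  "ldisjoint x y \<longleftrightarrow> inf (labs x) (labs y) = 0"

definition infinite_dimensional :: "'a::real_vector itself \<Rightarrow> bool" where
  "infinite_dimensional (_ :: 'a itself) \<longleftrightarrow>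
     (\<forall>B :: 'a set. finite B \<longrightarrow> span B \<noteq> UNIV)"

text \<open>Vectors in R^n are represented as functions nat => real; only indices < n matter.
  The sup-norm of (a_0,...,a_{n-1}) is Max over {0} and the |a_i|.\<close>

definition maxnorm :: "nat \<Rightarrow> (nat \<Rightarrow> real) \<Rightarrow> real" where
  "maxnorm n a = Max (insert 0 ((\<lambda>i. \<bar>a i\<bar>) ` {..<n}))"

definition linfty_fin_lattice_representable :: "'a::banach_lattice itself \<Rightarrow> bool" where
  "linfty_fin_lattice_representable (_ :: 'a itself) \<longleftrightarrow>
     (\<forall>n. \<forall>\<epsilon>>0. \<exists>x :: nat \<Rightarrow> 'a.
        (\<forall>i<n. \<forall>j<n. i \<noteq> j \<longrightarrow> ldisjoint (x i) (x j)) \<and>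
        (\<forall>a :: nat \<Rightarrow> real. maxnorm n a \<le> norm (\<Sum>i<n. a i *\<^sub>R x i) \<and>
                        norm (\<Sum>i<n. a i *\<^sub>R x i) \<le> (1 + \<epsilon>) * maxnorm n a))"

definition disjoint_unit_tuples :: "nat \<Rightarrow> (nat \<Rightarrow> 'a::banach_lattice) set" where
  "disjoint_unit_tuples n = {x. (\<forall>i<n. norm (x i) = 1) \<and>
                               (\<forall>i<n. \<forall>j<n. i \<noteq> j \<longrightarrow> ldisjoint (x i) (x j))}"

definition Phi :: "'a::banach_lattice itself \<Rightarrow> nat \<Rightarrow> (nat \<Rightarrow> real) \<Rightarrow> real" where
  "Phi (_ :: 'a itself) n a =
     Inf ((\<lambda>x::nat \<Rightarrow> 'a. norm (\<Sum>i<n. a i *\<^sub>R x i)) ` disjoint_unit_tuples n)"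

definition XL_norm_n :: "'a::banach_lattice itself \<Rightarrow> nat \<Rightarrow> (nat \<Rightarrow> real) \<Rightarrow> real" where
  "XL_norm_n T n a =
     Inf {(\<Sum>k\<in>F. Phi T n (c k)) | (F :: nat set) (c :: nat \<Rightarrow> nat \<Rightarrow> real).
            finite F \<and> (\<forall>i<n. a i = (\<Sum>k\<in>F. c k i))}"

definition in_XL :: "'a::banach_lattice itself \<Rightarrow> (nat \<Rightarrow> real) \<Rightarrow> bool" where
  "in_XL T a \<longleftrightarrow> bdd_above (range (\<lambda>n. XL_norm_n T n a))"

definition XL_norm :: "'a::banach_lattice itself \<Rightarrow> (nat \<Rightarrow> real) \<Rightarrow> real" where
  "XL_norm T a = (SUP n. XL_norm_n T n a)"

end

theory Submission
  imports Defs
begin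

lemma bl_add_le_iff: "x + z \<le> y + (z::'a::banach_lattice) \<longleftrightarrow> x \<le> y"
proof
  assume "x + z \<le> y + z"
  from bl_add_mono[OF this, of "-z"] show "x \<le> y" by simp
qed (rule bl_add_mono)

lemma bl_add_mono2: "a \<le> b \<Longrightarrow> c \<le> d \<Longrightarrow> a + c \<le> b + (d::'a::banach_lattice)"
proof -
  assume "a \<le> b" "c \<le> d"
  have "a + c \<le> b + c" using bl_add_mono[OF \<open>a \<le> b\<close>] .
  also have "\<dots> \<le> b + d" using bl_add_mono[OF \<open>c \<le> d\<close>, of b] by (simp add: add.commute)
  finally show ?thesis .
qed

lemma bl_neg_mono: "x \<le> y \<Longrightarrow> -y \<le> -(x::'a::banach_lattice)"
  using bl_add_mono[of x y "-x-y"] by simp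

lemma bl_add_sup: "sup x y + z = sup (x + z) (y + (z::'a::banach_lattice))"
proof (rule antisym)
  have "x \<le> sup (x + z) (y + z) - z" "y \<le> sup (x + z) (y + z) - z"
    using bl_add_le_iff[of x z "sup (x + z) (y + z) - z"]
          bl_add_le_iff[of y z "sup (x + z) (y + z) - z"] by auto
  hence "sup x y \<le> sup (x + z) (y + z) - z" by simp
  thus "sup x y + z \<le> sup (x + z) (y + z)"
    using bl_add_le_iff[of "sup x y" z "sup (x + z) (y + z) - z"] by simp
next
  show "sup (x + z) (y + z) \<le> sup x y + z"
    by (simp add: bl_add_le_iff)
qed

lemma bl_add_inf: "inf x y + z = inf (x + z) (y + (z::'a::banach_lattice))"
proof (rule antisym)
  have "inf (x + z) (y + z) - z \<le> x" "inf (x + z) (y + z) - z \<le> y"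
    using bl_add_le_iff[of "inf (x + z) (y + z) - z" z x]
          bl_add_le_iff[of "inf (x + z) (y + z) - z" z y] by auto
  hence "inf (x + z) (y + z) - z \<le> inf x y" by simp
  thus "inf (x + z) (y + z) \<le> inf x y + z"
    using bl_add_le_iff[of "inf (x + z) (y + z) - z" z "inf x y"] by simp
next
  show "inf x y + z \<le> inf (x + z) (y + z)"
    by (simp add: bl_add_le_iff)
qed

lemma bl_riesz:
  fixes w p q :: "'a::banach_lattice"
  assumes "0 \<le> w" "0 \<le> p" "0 \<le> q"
  shows "inf w (p + q) \<le> inf w p + inf w q"
proof -
  have "inf w (p + q) \<le> w + inf w q"
  proof -
    have "w \<le> w + w" using bl_add_mono2[OF order.refl[of w] assms(1)] by simp
    hence "inf w (p + q) \<le> w + w" by (meson inf.coboundedI1)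
    moreover have "w \<le> w + q" using bl_add_mono2[OF order.refl[of w] assms(3)] by simp
    hence "inf w (p + q) \<le> w + q" by (meson inf.coboundedI1)
    ultimately have "inf w (p + q) \<le> inf (w + w) (w + q)" by simp
    also have "\<dots> = w + inf w q" using bl_add_inf[of w q w] by (simp add: add.commute)
    finally show ?thesis .
  qed
  moreover have "inf w (p + q) \<le> p + inf w q"
  proof -
    have "w \<le> p + w" using bl_add_mono2[OF assms(2) order.refl[of w]] by simp
    hence "inf w (p + q) \<le> p + w" by (meson inf.coboundedI1)
    moreover have "inf w (p + q) \<le> p + q" by simp
    ultimately have "inf w (p + q) \<le> inf (p + w) (p + q)" by simp
    also have "\<dots> = p + inf w q" using bl_add_inf[of w q p] by (simp add: add.commute)
    finally show ?thesis .
  qed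
  ultimately have "inf w (p + q) \<le> inf (w + inf w q) (p + inf w q)" by simp
  also have "\<dots> = inf w p + inf w q" using bl_add_inf[of w p "inf w q"] by simp
  finally show ?thesis .
qed

lemma bl_scale_sup:
  fixes x y :: "'a::banach_lattice"
  assumes "0 \<le> c"
  shows "c *\<^sub>R sup x y = sup (c *\<^sub>R x) (c *\<^sub>R y)"
proof (cases "c = 0")
  case True thus ?thesis by simp
next
  case False
  hence c: "0 < c" using assms by simp
  show ?thesis
  proof (rule antisym)
    have "x \<le> inverse c *\<^sub>R sup (c *\<^sub>R x) (c *\<^sub>R y)"
      using bl_scale_mono[of "c *\<^sub>R x" "sup (c *\<^sub>R x) (c *\<^sub>R y)" "inverse c"] c by simp
    moreover have "y \<le> inverse c *\<^sub>R sup (c *\<^sub>R x) (c *\<^sub>R y)"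
      using bl_scale_mono[of "c *\<^sub>R y" "sup (c *\<^sub>R x) (c *\<^sub>R y)" "inverse c"] c by simp
    ultimately have "sup x y \<le> inverse c *\<^sub>R sup (c *\<^sub>R x) (c *\<^sub>R y)" by simp
    from bl_scale_mono[OF this, of c] c
    show "c *\<^sub>R sup x y \<le> sup (c *\<^sub>R x) (c *\<^sub>R y)" by simp
  next
    show "sup (c *\<^sub>R x) (c *\<^sub>R y) \<le> c *\<^sub>R sup x y"
      using bl_scale_mono[of x "sup x y" c] bl_scale_mono[of y "sup x y" c] assms by simp
  qed
qed

lemma bl_scale_inf:
  fixes x y :: "'a::banach_lattice"
  assumes "0 \<le> c"
  shows "c *\<^sub>R inf x y = inf (c *\<^sub>R x) (c *\<^sub>R y)"
proof (cases "c = 0")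
  case True thus ?thesis by simp
next
  case False
  hence c: "0 < c" using assms by simp
  show ?thesis
  proof (rule antisym)
    show "c *\<^sub>R inf x y \<le> inf (c *\<^sub>R x) (c *\<^sub>R y)"
      using bl_scale_mono[of "inf x y" x c] bl_scale_mono[of "inf x y" y c] assms by simp
  next
    have "inverse c *\<^sub>R inf (c *\<^sub>R x) (c *\<^sub>R y) \<le> x"
      using bl_scale_mono[of "inf (c *\<^sub>R x) (c *\<^sub>R y)" "c *\<^sub>R x" "inverse c"] c by simp
    moreover have "inverse c *\<^sub>R inf (c *\<^sub>R x) (c *\<^sub>R y) \<le> y"
      using bl_scale_mono[of "inf (c *\<^sub>R x) (c *\<^sub>R y)" "c *\<^sub>R y" "inverse c"] c by simp
    ultimately have "inverse c *\<^sub>R inf (c *\<^sub>R x) (c *\<^sub>R y) \<le> inf x y" by simp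
    from bl_scale_mono[OF this, of c] c
    show "inf (c *\<^sub>R x) (c *\<^sub>R y) \<le> c *\<^sub>R inf x y" by simp
  qed
qed

lemma labs_ge: "x \<le> labs x" "-x \<le> labs x"
  by (auto simp: labs_def)

lemma labs_nonneg: "0 \<le> labs (x::'a::banach_lattice)"
proof -
  have "x + (-x) \<le> labs x + labs x" by (rule bl_add_mono2[OF labs_ge])
  hence "0 \<le> labs x + labs x" by simp
  from bl_scale_mono[OF this, of "1/2"] have "0 \<le> (1/2) *\<^sub>R (labs x + labs x)" by simp
  also have "(1/2) *\<^sub>R (labs x + labs x) = labs x"
    by (simp add: scaleR_add_right[symmetric] scaleR_left_distrib[symmetric])
  finally show ?thesis .
qed

lemma labs_minus: "labs (- x) = labs (x::'a::banach_lattice)"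
  by (simp add: labs_def sup_commute)

lemma labs_scale: "labs (c *\<^sub>R x) = \<bar>c\<bar> *\<^sub>R labs (x::'a::banach_lattice)"
proof (cases "0 \<le> c")
  case True thus ?thesis by (simp add: labs_def bl_scale_sup)
next
  case False
  hence "labs (c *\<^sub>R x) = labs (\<bar>c\<bar> *\<^sub>R x)"
    using labs_minus[of "\<bar>c\<bar> *\<^sub>R x"] by simp
  thus ?thesis by (simp add: labs_def bl_scale_sup)
qed

lemma labs_triangle: "labs (x + y) \<le> labs x + labs (y::'a::banach_lattice)"
proof -
  have "x + y \<le> labs x + labs y" by (rule bl_add_mono2[OF labs_ge(1) labs_ge(1)])
  moreover have "-(x + y) \<le> labs x + labs y"
    using bl_add_mono2[OF labs_ge(2) labs_ge(2), of x y] by simp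
  ultimately show ?thesis by (simp add: labs_def)
qed

lemma ldisjoint_B:
  fixes u v :: "'a::banach_lattice"
  assumes "ldisjoint u v"
  shows "labs u \<le> labs (u + v)"
proof -
  have "u \<le> labs (u + v) + labs v"
    using bl_add_mono2[OF labs_ge(1)[of "u+v"] labs_ge(2)[of v]] by simp
  moreover have "-u \<le> labs (u + v) + labs v"
    using bl_add_mono2[OF labs_ge(2)[of "u+v"] labs_ge(1)[of v]] by simp
  ultimately have "labs u \<le> labs (u + v) + labs v" by (simp add: labs_def)
  hence "labs u = inf (labs u) (labs (u + v) + labs v)" by (simp add: inf_absorb1)
  also have "\<dots> \<le> inf (labs u) (labs (u + v)) + inf (labs u) (labs v)"
    by (rule bl_riesz[OF labs_nonneg labs_nonneg labs_nonneg])
  also have "\<dots> = inf (labs u) (labs (u + v))"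
    using assms by (simp add: ldisjoint_def)
  also have "\<dots> \<le> labs (u + v)" by simp
  finally show ?thesis .
qed

lemma ldisjoint_add:
  fixes u v w :: "'a::banach_lattice"
  assumes "ldisjoint u v" "ldisjoint u w"
  shows "ldisjoint u (v + w)"
proof -
  have "inf (labs u) (labs (v + w)) \<le> inf (labs u) (labs v + labs w)"
    using labs_triangle[of v w] by (meson inf_mono order_refl)
  also have "\<dots> \<le> inf (labs u) (labs v) + inf (labs u) (labs w)"
    by (rule bl_riesz[OF labs_nonneg labs_nonneg labs_nonneg])
  also have "\<dots> = 0" using assms by (simp add: ldisjoint_def)
  finally have "inf (labs u) (labs (v + w)) \<le> 0" .
  moreover have "0 \<le> inf (labs u) (labs (v + w))" by (simp add: labs_nonneg)
  ultimately show ?thesis by (simp add: ldisjoint_def)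
qed

lemma ldisjoint_zero: "ldisjoint u (0::'a::banach_lattice)"
proof -
  have "labs (0::'a) = 0" by (simp add: labs_def)
  thus ?thesis by (simp add: ldisjoint_def inf_absorb2 labs_nonneg)
qed

lemma ldisjoint_sum:
  fixes u :: "'a::banach_lattice"
  assumes "finite S" "\<And>i. i \<in> S \<Longrightarrow> ldisjoint u (f i)"
  shows "ldisjoint u (sum f S)"
  using assms by (induction S rule: finite_induct) (auto intro: ldisjoint_add ldisjoint_zero)

lemma scale_le_pos:
  fixes p :: "'a::banach_lattice"
  assumes "0 \<le> p" "a \<le> b"
  shows "a *\<^sub>R p \<le> b *\<^sub>R p"
proof -
  have "(b - a) *\<^sub>R 0 \<le> (b - a) *\<^sub>R p" by (rule bl_scale_mono) (use assms in auto)
  hence "0 + a *\<^sub>R p \<le> (b - a) *\<^sub>R p + a *\<^sub>R p" by (intro bl_add_mono) simp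
  thus ?thesis by (simp add: scaleR_left_diff_distrib)
qed

lemma ldisjoint_scale:
  fixes x y :: "'a::banach_lattice"
  assumes "ldisjoint x y"
  shows "ldisjoint (a *\<^sub>R x) (b *\<^sub>R y)"
proof -
  define T where "T = \<bar>a\<bar> + \<bar>b\<bar>"
  have T: "0 \<le> T" "\<bar>a\<bar> \<le> T" "\<bar>b\<bar> \<le> T" by (auto simp: T_def)
  have "inf (labs (a *\<^sub>R x)) (labs (b *\<^sub>R y)) \<le> inf (T *\<^sub>R labs x) (T *\<^sub>R labs y)"
    unfolding labs_scale
    by (rule inf_mono; rule scale_le_pos[OF labs_nonneg]; simp add: T)
  also have "\<dots> = T *\<^sub>R inf (labs x) (labs y)" by (simp add: bl_scale_inf[OF T(1)])
  also have "\<dots> = 0" using assms by (simp add: ldisjoint_def)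
  finally have "inf (labs (a *\<^sub>R x)) (labs (b *\<^sub>R y)) \<le> 0" .
  moreover have "0 \<le> inf (labs (a *\<^sub>R x)) (labs (b *\<^sub>R y))" by (simp add: labs_nonneg)
  ultimately show ?thesis by (simp add: ldisjoint_def)
qed

lemma disjoint_lower:
  fixes x :: "nat \<Rightarrow> 'a::banach_lattice"
  assumes disj: "\<forall>i<n. \<forall>j<n. i \<noteq> j \<longrightarrow> ldisjoint (x i) (x j)" and j: "j < n"
  shows "norm (a j *\<^sub>R x j) \<le> norm (\<Sum>i<n. a i *\<^sub>R x i)"
proof -
  have eq: "(\<Sum>i<n. a i *\<^sub>R x i) = a j *\<^sub>R x j + (\<Sum>i\<in>{..<n} - {j}. a i *\<^sub>R x i)"
    using j by (simp add: sum.remove)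
  have "ldisjoint (a j *\<^sub>R x j) (\<Sum>i\<in>{..<n} - {j}. a i *\<^sub>R x i)"
    by (rule ldisjoint_sum) (use disj j in \<open>auto intro: ldisjoint_scale\<close>)
  from ldisjoint_B[OF this] have "labs (a j *\<^sub>R x j) \<le> labs (\<Sum>i<n. a i *\<^sub>R x i)"
    by (simp add: eq)
  hence "norm (a j *\<^sub>R x j) \<le> norm (\<Sum>i<n. a i *\<^sub>R x i)"
    by (intro bl_norm_mono) (simp add: labs_def)
  thus ?thesis .
qed

lemma maxnorm_le_iff: "maxnorm n a \<le> M \<longleftrightarrow> 0 \<le> M \<and> (\<forall>i<n. \<bar>a i\<bar> \<le> M)"
  unfolding maxnorm_def by (subst Max_le_iff) auto

lemma maxnorm_ge: "i < n \<Longrightarrow> \<bar>a i\<bar> \<le> maxnorm n a" "0 \<le> maxnorm n a"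
  unfolding maxnorm_def by (auto intro: Max_ge)

lemma Phi_set_lower:
  fixes x :: "nat \<Rightarrow> 'a::banach_lattice"
  assumes "x \<in> disjoint_unit_tuples n"
  shows "maxnorm n a \<le> norm (\<Sum>i<n. a i *\<^sub>R x i)"
proof -
  have "\<bar>a i\<bar> \<le> norm (\<Sum>i<n. a i *\<^sub>R x i)" if "i < n" for i
    using disjoint_lower[of n x i a] assms that by (auto simp: disjoint_unit_tuples_def)
  thus ?thesis by (simp add: maxnorm_le_iff)
qed

lemma good_tuple:
  assumes rep: "linfty_fin_lattice_representable TYPE('a::banach_lattice)" and e: "0 < e"
  shows "\<exists>y :: nat \<Rightarrow> 'a. y \<in> disjoint_unit_tuples n \<and>
           (\<forall>a. norm (\<Sum>i<n. a i *\<^sub>R y i) \<le> (1 + e) * maxnorm n a)"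
proof -
  obtain x :: "nat \<Rightarrow> 'a" where disj: "\<forall>i<n. \<forall>j<n. i \<noteq> j \<longrightarrow> ldisjoint (x i) (x j)"
    and bnd: "\<forall>a. maxnorm n a \<le> norm (\<Sum>i<n. a i *\<^sub>R x i) \<and>
                 norm (\<Sum>i<n. a i *\<^sub>R x i) \<le> (1 + e) * maxnorm n a"
    using rep e unfolding linfty_fin_lattice_representable_def by blast
  have nx: "1 \<le> norm (x i)" if i: "i < n" for i
  proof -
    define d where "d = (\<lambda>k::nat. if k = i then 1 else (0::real))"
    have "1 \<le> maxnorm n d" using maxnorm_ge(1)[OF i, of d] by (simp add: d_def)
    also have "\<dots> \<le> norm (\<Sum>k<n. d k *\<^sub>R x k)" using bnd by blast
    also have "(\<Sum>k<n. d k *\<^sub>R x k) = (\<Sum>k<n. if k = i then x k else 0)"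
      by (rule sum.cong) (auto simp: d_def)
    also have "\<dots> = x i" using i by simp
    finally show ?thesis .
  qed
  define y where "y = (\<lambda>i. inverse (norm (x i)) *\<^sub>R x i)"
  have "y \<in> disjoint_unit_tuples n"
    unfolding disjoint_unit_tuples_def y_def
  proof (intro CollectI conjI allI impI)
    fix i assume "i < n"
    with nx[of i] have "norm (x i) \<noteq> 0" by linarith
    thus "norm (inverse (norm (x i)) *\<^sub>R x i) = 1" by simp
  next
    fix i j assume "i < n" "j < n" "i \<noteq> j"
    thus "ldisjoint (inverse (norm (x i)) *\<^sub>R x i) (inverse (norm (x j)) *\<^sub>R x j)"
      using disj by (auto intro: ldisjoint_scale)
  qed
  moreover have "norm (\<Sum>i<n. a i *\<^sub>R y i) \<le> (1 + e) * maxnorm n a" for a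
  proof -
    define b where "b = (\<lambda>i. a i * inverse (norm (x i)))"
    have "(\<Sum>i<n. a i *\<^sub>R y i) = (\<Sum>i<n. b i *\<^sub>R x i)" by (simp add: y_def b_def)
    hence "norm (\<Sum>i<n. a i *\<^sub>R y i) \<le> (1 + e) * maxnorm n b" using bnd by simp
    also have "maxnorm n b \<le> maxnorm n a"
    proof -
      have "\<bar>b i\<bar> \<le> maxnorm n a" if i: "i < n" for i
      proof -
        have "\<bar>b i\<bar> = \<bar>a i\<bar> / norm (x i)" by (simp add: b_def abs_mult field_simps)
        also have "\<dots> \<le> \<bar>a i\<bar> / 1" by (rule divide_left_mono) (use nx[OF i] in auto)
        also have "\<dots> \<le> maxnorm n a" using maxnorm_ge(1)[OF i] by simp
        finally show ?thesis .
      qed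
      thus ?thesis by (simp add: maxnorm_le_iff maxnorm_ge(2))
    qed
    hence "(1 + e) * maxnorm n b \<le> (1 + e) * maxnorm n a" using e by simp
    finally show ?thesis .
  qed
  ultimately show ?thesis by blast
qed

lemma Phi_eq:
  assumes rep: "linfty_fin_lattice_representable TYPE('a::banach_lattice)"
  shows "Phi TYPE('a) n a = maxnorm n a"
proof -
  let ?S = "(\<lambda>x::nat \<Rightarrow> 'a. norm (\<Sum>i<n. a i *\<^sub>R x i)) ` disjoint_unit_tuples n"
  obtain y0 :: "nat \<Rightarrow> 'a" where "y0 \<in> disjoint_unit_tuples n"
    using good_tuple[OF rep, of 1 n] by auto
  hence ne: "?S \<noteq> {}" by auto
  have bdd: "bdd_below ?S" by (rule bdd_belowI[of _ 0]) auto
  have lo: "maxnorm n a \<le> Inf ?S"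
    by (rule cInf_greatest[OF ne]) (auto intro: Phi_set_lower)
  have up: "Inf ?S \<le> maxnorm n a + d" if d: "0 < d" for d
  proof -
    define e where "e = d / (maxnorm n a + 1)"
    have mp: "0 \<le> maxnorm n a" by (rule maxnorm_ge(2))
    have e: "0 < e" using d mp by (simp add: e_def)
    obtain y :: "nat \<Rightarrow> 'a" where y: "y \<in> disjoint_unit_tuples n"
      and yb: "\<forall>a. norm (\<Sum>i<n. a i *\<^sub>R y i) \<le> (1 + e) * maxnorm n a"
      using good_tuple[OF rep e, of n] by auto
    have "Inf ?S \<le> norm (\<Sum>i<n. a i *\<^sub>R y i)" using y bdd by (auto intro: cInf_lower)
    also have "\<dots> \<le> (1 + e) * maxnorm n a" using yb by blast
    also have "\<dots> = maxnorm n a + e * maxnorm n a" by (simp add: algebra_simps)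
    also have "e * maxnorm n a \<le> d"
    proof -
      have "e * maxnorm n a \<le> e * (maxnorm n a + 1)" using e by simp
      also have "\<dots> = d" using mp by (simp add: e_def)
      finally show ?thesis .
    qed
    finally show ?thesis by simp
  qed
  have "Inf ?S \<le> maxnorm n a" by (rule field_le_epsilon) (use up in auto)
  with lo show ?thesis unfolding Phi_def by simp
qed

lemma XL_norm_n_eq:
  assumes rep: "linfty_fin_lattice_representable TYPE('a::banach_lattice)"
  shows "XL_norm_n TYPE('a) n a = maxnorm n a"
  unfolding XL_norm_n_def
proof (rule cInf_eq_minimum)
  show "maxnorm n a \<in> {\<Sum>k\<in>F. Phi TYPE('a) n (c k) |(F :: nat set) c. finite F \<and> (\<forall>i<n. a i = (\<Sum>k\<in>F. c k i))}"
  proof -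
    have "\<exists>(F::nat set) c. maxnorm n a = (\<Sum>k\<in>F. Phi TYPE('a) n (c k)) \<and> finite F \<and> (\<forall>i<n. a i = (\<Sum>k\<in>F. c k i))"
    proof -
      define c0 where "c0 = (\<lambda>k::nat. a)"
      have h: "maxnorm n a = (\<Sum>k\<in>{0::nat}. Phi TYPE('a) n (c0 k)) \<and> finite {0::nat} \<and> (\<forall>i<n. a i = (\<Sum>k\<in>{0::nat}. c0 k i))"
        by (simp add: Phi_eq[OF rep] c0_def)
      show ?thesis by (rule exI[of _ "{0::nat}"], rule exI[of _ c0], rule h)
    qed
    thus ?thesis unfolding mem_Collect_eq .
  qed
next
  fix s assume "s \<in> {\<Sum>k\<in>F. Phi TYPE('a) n (c k) |(F :: nat set) c. finite F \<and> (\<forall>i<n. a i = (\<Sum>k\<in>F. c k i))}"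
  hence "\<exists>(F::nat set) (c::nat \<Rightarrow> nat \<Rightarrow> real). s = (\<Sum>k\<in>F. Phi TYPE('a) n (c k)) \<and> finite F \<and> (\<forall>i<n. a i = (\<Sum>k\<in>F. c k i))"
    unfolding mem_Collect_eq .
  then obtain F :: "nat set" and c :: "nat \<Rightarrow> nat \<Rightarrow> real" where
    s: "s = (\<Sum>k\<in>F. Phi TYPE('a) n (c k))" and F: "finite F" and ac: "\<forall>i<n. a i = (\<Sum>k\<in>F. c k i)"
    by (elim exE conjE)
  have s': "s = (\<Sum>k\<in>F. maxnorm n (c k))" using s by (simp add: Phi_eq[OF rep])
  have "\<bar>a i\<bar> \<le> s" if i: "i < n" for i
  proof -
    have "\<bar>a i\<bar> = \<bar>\<Sum>k\<in>F. c k i\<bar>" using ac i by simp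
    also have "\<dots> \<le> (\<Sum>k\<in>F. \<bar>c k i\<bar>)" by (rule sum_abs)
    also have "\<dots> \<le> (\<Sum>k\<in>F. maxnorm n (c k))" by (rule sum_mono) (rule maxnorm_ge(1)[OF i])
    finally show ?thesis using s' by simp
  qed
  moreover have "0 \<le> s" using s' by (simp add: sum_nonneg maxnorm_ge(2))
  ultimately show "maxnorm n a \<le> s" by (simp add: maxnorm_le_iff)
qed

theorem mainTheorem16:
  assumes "infinite_dimensional TYPE('a::banach_lattice)"
    and "linfty_fin_lattice_representable TYPE('a)"
  shows "\<forall>a :: nat \<Rightarrow> real.
           (in_XL TYPE('a) a \<longleftrightarrow> bdd_above (range (\<lambda>i. \<bar>a i\<bar>))) \<and>
           (in_XL TYPE('a) a \<longrightarrow> XL_norm TYPE('a) a = (SUP i. \<bar>a i\<bar>))"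
proof
  fix a :: "nat \<Rightarrow> real"
  have X: "\<And>n. XL_norm_n TYPE('a) n a = maxnorm n a" by (rule XL_norm_n_eq[OF assms(2)])
  have iff: "in_XL TYPE('a) a \<longleftrightarrow> bdd_above (range (\<lambda>i. \<bar>a i\<bar>))"
  proof
    assume "in_XL TYPE('a) a"
    hence "bdd_above (range (\<lambda>n. maxnorm n a))" unfolding in_XL_def X .
    then obtain B where B0: "\<forall>x\<in>range (\<lambda>n. maxnorm n a). x \<le> B" unfolding bdd_above_def by blast
    have B: "maxnorm n a \<le> B" for n using B0 by blast
    have "\<bar>a i\<bar> \<le> B" for i using maxnorm_ge(1)[of i "Suc i" a] B[of "Suc i"] by simp
    thus "bdd_above (range (\<lambda>i. \<bar>a i\<bar>))" by (intro bdd_aboveI2) auto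
  next
    assume "bdd_above (range (\<lambda>i. \<bar>a i\<bar>))"
    then obtain B where B0: "\<forall>x\<in>range (\<lambda>i. \<bar>a i\<bar>). x \<le> B" unfolding bdd_above_def by blast
    have B: "\<bar>a i\<bar> \<le> B" for i using B0 by blast
    have "0 \<le> B" using B[of 0] by linarith
    hence "maxnorm n a \<le> B" for n using B by (simp add: maxnorm_le_iff)
    thus "in_XL TYPE('a) a" unfolding in_XL_def X by (intro bdd_aboveI2) auto
  qed
  moreover have "in_XL TYPE('a) a \<longrightarrow> XL_norm TYPE('a) a = (SUP i. \<bar>a i\<bar>)"
  proof
    assume inx: "in_XL TYPE('a) a"
    hence b1: "bdd_above (range (\<lambda>n. maxnorm n a))" unfolding in_XL_def X .
    have b2: "bdd_above (range (\<lambda>i. \<bar>a i\<bar>))" using iff inx by simp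
    have "(SUP n. maxnorm n a) = (SUP i. \<bar>a i\<bar>)"
    proof (rule antisym)
      show "(SUP n. maxnorm n a) \<le> (SUP i. \<bar>a i\<bar>)"
      proof (rule cSUP_least)
        fix n
        have "0 \<le> (SUP i. \<bar>a i\<bar>)" using cSUP_upper[OF UNIV_I b2, of 0] by linarith
        moreover have "\<bar>a i\<bar> \<le> (SUP i. \<bar>a i\<bar>)" for i using cSUP_upper[OF UNIV_I b2] .
        ultimately show "maxnorm n a \<le> (SUP i. \<bar>a i\<bar>)" by (simp add: maxnorm_le_iff)
      qed simp
    next
      show "(SUP i. \<bar>a i\<bar>) \<le> (SUP n. maxnorm n a)"
      proof (rule cSUP_least)
        fix i
        have "\<bar>a i\<bar> \<le> maxnorm (Suc i) a" by (rule maxnorm_ge(1)) simp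
        also have "\<dots> \<le> (SUP n. maxnorm n a)" by (rule cSUP_upper[OF UNIV_I b1])
        finally show "\<bar>a i\<bar> \<le> (SUP n. maxnorm n a)" .
      qed simp
    qed
    thus "XL_norm TYPE('a) a = (SUP i. \<bar>a i\<bar>)" unfolding XL_norm_def X .
  qed
  ultimately show "(in_XL TYPE('a) a \<longleftrightarrow> bdd_above (range (\<lambda>i. \<bar>a i\<bar>))) \<and>
           (in_XL TYPE('a) a \<longrightarrow> XL_norm TYPE('a) a = (SUP i. \<bar>a i\<bar>))" by blast
qed

end
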